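(* Let $p,q$ be integers with $1+|p|<|q|$ and $\gcd(p,q)=1$, and assume $t(x)=x^2+px-q$ is irreducible in $\mathbb{Z}[x]$. Then for every nonzero $\gamma\in\mathbb{Z}^2$ the language $\psi_{p,q}^{-1}(\langle\gamma\rangle)$ is not regular.
   Context: For $f,g\in\mathbb{Z}[x]$ write $f\sim g$ if $t$ divides $f-g$; identify $\mathbb{Z}^2$ with the additive group of $\mathbb{Z}[x]/\langle t\rangle$ via $(h_1,h_2)\mapsto[h_1x+h_2]_\sim$. Let $\Sigma_q=\{-(|q|-1),\dots,|q|-1\}$ with the order $-(|q|-1)<\dots<|q|-1$; a string $a_0a_1\dots a_n\in\Sigma_q^*$ represents the polynomial $a_nx^n+\dots+a_1x+a_0$, and two strings are equivalent if their polynomials are $\sim$-equivalent. $\mathrm{Dom}_{p,q}$ is the set of $w\in\Sigma_q^*$ such that no string strictly smaller than $w$ in the length-lexicographic order on $\Sigma_q^*$ is equivalent to $w$, and $\psi_{p,q}:\mathrm{Dom}_{p,q}\to\mathbb{Z}^2$ sends $w$ to the $\sim$-class of the polynomial it represents. *)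

theory Defs
  imports "HOL-Computational_Algebra.Polynomial" "HOL-Computational_Algebra.Factorial_Ring"
begin

definition tpoly :: "int \<Rightarrow> int \<Rightarrow> int poly" where
  "tpoly p q = [:-q, p, 1:]"

definition tequiv :: "int \<Rightarrow> int \<Rightarrow> int poly \<Rightarrow> int poly \<Rightarrow> bool" where
  "tequiv p q f g \<longleftrightarrow> tpoly p q dvd (f - g)"

definition digits :: "int \<Rightarrow> int set" where
  "digits q = {-(\<bar>q\<bar> - 1) .. \<bar>q\<bar> - 1}"

text \<open>The string a0 a1 ... an represents an x^n + ... + a1 x + a0.\<close>
definition strpoly :: "int list \<Rightarrow> int poly" where
  "strpoly w = Poly w"

definition str_equiv :: "int \<Rightarrow> int \<Rightarrow> int list \<Rightarrow> int list \<Rightarrow> bool" where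
  "str_equiv p q v w \<longleftrightarrow> tequiv p q (strpoly v) (strpoly w)"

text \<open>Strict length-lexicographic order on strings (first letter a0 most significant
  among strings of equal length), letters ordered as integers.\<close>
definition llex_less :: "int list \<Rightarrow> int list \<Rightarrow> bool" where
  "llex_less v w \<longleftrightarrow> length v < length w \<or>
     (length v = length w \<and> (v, w) \<in> lexord {(a, b). a < b})"

definition Dom :: "int \<Rightarrow> int \<Rightarrow> int list set" where
  "Dom p q = {w \<in> lists (digits q).
      \<not> (\<exists>v \<in> lists (digits q). llex_less v w \<and> str_equiv p q v w)}"

text \<open>Identification of Z^2 with Z[x]/<t>: (h1,h2) corresponds to the class of h1 x + h2.\<close>
definition psi :: "int \<Rightarrow> int \<Rightarrow> int list \<Rightarrow> int \<times> int" where
  "psi p q w = (THE h. tequiv p q (strpoly w) [:snd h, fst h:])"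

definition cyclic_subgroup :: "int \<times> int \<Rightarrow> (int \<times> int) set" where
  "cyclic_subgroup g = {(k * fst g, k * snd g) | k. True}"

definition regular_lang :: "'a set \<Rightarrow> 'a list set \<Rightarrow> bool" where
  "regular_lang A L \<longleftrightarrow> L \<subseteq> lists A \<and>
     (\<exists>(Q :: nat set) s F (\<delta> :: nat \<Rightarrow> 'a \<Rightarrow> nat).
        finite Q \<and> s \<in> Q \<and> F \<subseteq> Q \<and>
        (\<forall>x \<in> Q. \<forall>a \<in> A. \<delta> x a \<in> Q) \<and>
        L = {w \<in> lists A. foldl \<delta> s w \<in> F})"

end

theory Submission
  imports Defs "HOL-Library.Product_Plus"
begin


definition mulx :: "int \<Rightarrow> int \<Rightarrow> int \<times> int \<Rightarrow> int \<times> int" where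
  "mulx p q h = (snd h - p * fst h, q * fst h)"

fun vl :: "int \<Rightarrow> int \<Rightarrow> int list \<Rightarrow> int \<times> int" where
  "vl p q [] = (0,0)"
| "vl p q (a # w) = mulx p q (vl p q w) + (0, a)"

lemma mulx_add: "mulx p q (x + y) = mulx p q x + mulx p q y"
  by (simp add: mulx_def algebra_simps prod_eq_iff)

lemma mulx_diff: "mulx p q (x - y) = mulx p q x - mulx p q y"
  by (simp add: mulx_def algebra_simps prod_eq_iff)

lemma mulxn_add: "(mulx p q ^^ n) (x + y) = (mulx p q ^^ n) x + (mulx p q ^^ n) y"
  by (induction n) (auto simp: mulx_add)

lemma mulxn_diff: "(mulx p q ^^ n) (x - y) = (mulx p q ^^ n) x - (mulx p q ^^ n) y"
  by (induction n) (auto simp: mulx_diff)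

lemma mulxn_zero: "(mulx p q ^^ n) 0 = 0"
  by (induction n) (auto simp: mulx_def zero_prod_def)

lemma vl_append: "vl p q (xs @ ys) = vl p q xs + (mulx p q ^^ length xs) (vl p q ys)"
  by (induction xs) (auto simp: mulx_add algebra_simps zero_prod_def[symmetric] mulxn_zero)

lemma mulxn_commute: "(mulx p q ^^ a) ((mulx p q ^^ b) x) = (mulx p q ^^ b) ((mulx p q ^^ a) x)"
  by (metis add.commute comp_apply funpow_add)

lemma tequiv_vl: "tequiv p q (strpoly w) [:snd (vl p q w), fst (vl p q w):]"
proof (induction w)
  case Nil
  then show ?case by (simp add: tequiv_def strpoly_def)
next
  case (Cons a w)
  obtain g1 g0 where g: "vl p q w = (g1, g0)" by (cases "vl p q w")
  from Cons obtain k where k: "Poly w - [:g0, g1:] = tpoly p q * k"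
    by (auto simp: tequiv_def g dvd_def strpoly_def)
  have "Poly (a # w) - [:q * g1 + a, g0 - p * g1:]
      = pCons 0 (Poly w - [:g0, g1:]) + smult g1 (tpoly p q)"
    by (simp add: tpoly_def algebra_simps)
  also have "\<dots> = tpoly p q * (pCons 0 k + [:g1:])"
    by (simp add: k algebra_simps)
  finally have "tpoly p q dvd Poly (a # w) - [:q * g1 + a, g0 - p * g1:]" by (rule dvdI)
  then show ?case by (simp add: tequiv_def strpoly_def g mulx_def)
qed

lemma tdvd_lin: "tpoly p q dvd [:c, d:] \<Longrightarrow> c = 0 \<and> d = 0"
proof (rule ccontr)
  assume a: "tpoly p q dvd [:c, d:]" "\<not> (c = 0 \<and> d = 0)"
  then have "[:c, d:] \<noteq> 0" by auto
  from dvd_imp_degree_le[OF a(1) this] have "degree (tpoly p q) \<le> degree [:c, d:]" .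
  moreover have "degree [:c, d:] \<le> 1" by simp
  moreover have "degree (tpoly p q) = 2" by (simp add: tpoly_def)
  ultimately show False by simp
qed

lemma tequiv_lin: "tequiv p q [:b, a:] [:b', a':] \<Longrightarrow> a = a' \<and> b = b'"
  using tdvd_lin[of p q "b - b'" "a - a'"] by (simp add: tequiv_def)

lemma tequiv_trans: "tequiv p q f g \<Longrightarrow> tequiv p q g h \<Longrightarrow> tequiv p q f h"
proof -
  assume "tequiv p q f g" "tequiv p q g h"
  then have "tpoly p q dvd (f - g) + (g - h)" unfolding tequiv_def by (rule dvd_add)
  then show ?thesis unfolding tequiv_def by simp
qed

lemma tequiv_sym: "tequiv p q f g \<Longrightarrow> tequiv p q g f"
proof -
  assume "tequiv p q f g"
  then have "tpoly p q dvd - (f - g)" unfolding tequiv_def by (simp only: dvd_minus_iff)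
  then show ?thesis unfolding tequiv_def by simp
qed

lemma str_equiv_iff: "str_equiv p q v w \<longleftrightarrow> vl p q v = vl p q w"
proof
  assume "str_equiv p q v w"
  then have "tequiv p q [:snd (vl p q v), fst (vl p q v):] [:snd (vl p q w), fst (vl p q w):]"
    unfolding str_equiv_def
    by (meson tequiv_sym tequiv_trans tequiv_vl)
  then show "vl p q v = vl p q w" by (auto dest: tequiv_lin simp: prod_eq_iff)
next
  assume "vl p q v = vl p q w"
  then show "str_equiv p q v w" unfolding str_equiv_def
    by (metis tequiv_sym tequiv_trans tequiv_vl)
qed

lemma psi_vl: "psi p q w = vl p q w"
  unfolding psi_def
proof (rule the_equality)
  show "tequiv p q (strpoly w) [:snd (vl p q w), fst (vl p q w):]" by (rule tequiv_vl)
next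
  fix h assume "tequiv p q (strpoly w) [:snd h, fst h:]"
  then have "tequiv p q [:snd (vl p q w), fst (vl p q w):] [:snd h, fst h:]"
    by (meson tequiv_sym tequiv_trans tequiv_vl)
  then show "h = vl p q w" by (auto dest: tequiv_lin simp: prod_eq_iff)
qed

lemma represent:
  assumes pq: "1 + \<bar>p\<bar> < \<bar>q\<bar>"
  shows "\<exists>w \<in> lists (digits q). vl p q w = h"
proof (induction h rule: measure_induct_rule[where f = "\<lambda>h. nat (2 * (\<bar>fst h\<bar> + \<bar>snd h\<bar>) + (if snd h = 0 then 1 else 0))"])
  case (less h)
  obtain h1 h2 where h: "h = (h1, h2)" by (cases h)
  show ?case
  proof (cases "h = (0, 0)")
    case True
    then show ?thesis by (intro bexI[of _ "[]"]) auto
  next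
    case False
    define d where "d = \<bar>h2\<bar> div \<bar>q\<bar>"
    define r where "r = \<bar>h2\<bar> mod \<bar>q\<bar>"
    define g1 where "g1 = sgn h2 * sgn q * d"
    define a0 where "a0 = sgn h2 * r"
    define g0 where "g0 = h1 + p * g1"
    have q0: "q \<noteq> 0" using pq by auto
    have dr: "\<bar>h2\<bar> = \<bar>q\<bar> * d + r" unfolding d_def r_def by simp
    have r0: "0 \<le> r" "r < \<bar>q\<bar>" unfolding r_def using q0 by auto
    have d0: "0 \<le> d" unfolding d_def using q0 by (simp add: pos_imp_zdiv_nonneg_iff)
    have "q * g1 + a0 = sgn h2 * (\<bar>q\<bar> * d + r)"
      unfolding g1_def a0_def by (simp add: algebra_simps abs_sgn)
    also have "\<dots> = h2" by (metis dr sgn_mult_abs)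
    finally have e2: "q * g1 + a0 = h2" .
    have e1: "g0 - p * g1 = h1" unfolding g0_def by simp
    have a0d: "a0 \<in> digits q" unfolding digits_def a0_def using r0
      by (auto simp: sgn_if)
    have g1abs: "\<bar>g1\<bar> \<le> d" unfolding g1_def using d0 by (auto simp: sgn_if abs_mult)
    have qd: "\<bar>q\<bar> * d \<le> \<bar>h2\<bar>" using dr r0 by linarith
    have lt: "(1 + \<bar>p\<bar>) * \<bar>g1\<bar> < \<bar>h2\<bar>" if "h2 \<noteq> 0"
    proof (cases "g1 = 0")
      case True then show ?thesis using that by simp
    next
      case False
      have "(1 + \<bar>p\<bar>) * \<bar>g1\<bar> < \<bar>q\<bar> * \<bar>g1\<bar>" using pq False by simp
      also have "\<dots> \<le> \<bar>q\<bar> * d" using g1abs by (simp add: mult_left_mono)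
      finally show ?thesis using qd by linarith
    qed
    have g0abs: "\<bar>g0\<bar> \<le> \<bar>h1\<bar> + \<bar>p\<bar> * \<bar>g1\<bar>" unfolding g0_def
      by (metis abs_mult abs_triangle_ineq)
    have meas: "nat (2 * (\<bar>g1\<bar> + \<bar>g0\<bar>) + (if g0 = 0 then 1 else 0))
        < nat (2 * (\<bar>h1\<bar> + \<bar>h2\<bar>) + (if h2 = 0 then 1 else 0))"
    proof (cases "h2 = 0")
      case True
      then have "g1 = 0" unfolding g1_def by simp
      then have "g0 = h1" unfolding g0_def by simp
      have "h1 \<noteq> 0" using False True h by auto
      then show ?thesis using True \<open>g1 = 0\<close> \<open>g0 = h1\<close> by simp
    next
      case False
      have n: "0 \<le> \<bar>g1\<bar> * \<bar>p\<bar>" by simp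
      have "\<bar>g1\<bar> + \<bar>g0\<bar> < \<bar>h1\<bar> + \<bar>h2\<bar>" using lt[OF False] g0abs n by (simp add: algebra_simps)
      then show ?thesis by (auto simp: algebra_simps)
    qed
    from less[of "(g1, g0)"] meas obtain w where w: "w \<in> lists (digits q)" "vl p q w = (g1, g0)"
      unfolding h by auto
    show ?thesis
      by (intro bexI[of _ "a0 # w"]) (auto simp: w a0d h mulx_def e1 e2)
  qed
qed

lemma llex_irrefl: "\<not> llex_less v v"
  unfolding llex_less_def using lexord_irreflexive[of "{(a::int, b). a < b}" v] by auto

lemma llex_trans: "llex_less u v \<Longrightarrow> llex_less v w \<Longrightarrow> llex_less u w"
proof -
  have tr: "trans {(a::int, b). a < b}" by (auto simp: trans_def)
  assume "llex_less u v" "llex_less v w"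
  then show ?thesis unfolding llex_less_def using lexord_trans[OF _ _ tr, of u v w] by auto
qed

lemma llex_total: "v \<noteq> w \<Longrightarrow> llex_less v w \<or> llex_less w v"
proof -
  assume "v \<noteq> w"
  have "(v, w) \<in> lexord {(a::int, b). a < b} \<or> v = w \<or> (w, v) \<in> lexord {(a::int, b). a < b}"
    by (rule lexord_linear) auto
  then show ?thesis unfolding llex_less_def using \<open>v \<noteq> w\<close> by (cases "length v" "length w" rule: linorder_cases) auto
qed

lemma dom_unique: "v \<in> Dom p q \<Longrightarrow> w \<in> Dom p q \<Longrightarrow> vl p q v = vl p q w \<Longrightarrow> v = w"
proof (rule ccontr)
  assume a: "v \<in> Dom p q" "w \<in> Dom p q" "vl p q v = vl p q w" "v \<noteq> w"
  then have e: "str_equiv p q v w" "str_equiv p q w v" by (auto simp: str_equiv_iff)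
  from llex_total[OF a(4)] show False
  proof
    assume "llex_less v w" then show False using a(1,2) e(1) unfolding Dom_def by auto
  next
    assume "llex_less w v" then show False using a(1,2) e(2) unfolding Dom_def by auto
  qed
qed

lemma dom_exists:
  assumes pq: "1 + \<bar>p\<bar> < \<bar>q\<bar>"
  shows "\<exists>w \<in> Dom p q. vl p q w = h"
proof -
  obtain w0 where w0: "w0 \<in> lists (digits q)" "vl p q w0 = h" using represent[OF pq] by blast
  define S where "S = {v \<in> lists (digits q). length v \<le> length w0 \<and> vl p q v = h}"
  have fd: "finite (digits q)" by (simp add: digits_def)
  have fS: "finite S" unfolding S_def
    by (rule finite_subset[OF _ finite_lists_length_le[OF fd, of "length w0"]]) auto
  define R where "R = {(v, w). v \<in> S \<and> w \<in> S \<and> llex_less v w}"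
  have fR: "finite R" by (rule finite_subset[of _ "S \<times> S"]) (auto simp: R_def fS)
  have trR: "trans R" unfolding R_def trans_def using llex_trans by blast
  have acR: "acyclic R" unfolding acyclic_def
  proof
    fix x show "(x, x) \<notin> R\<^sup>+"
    proof
      assume "(x, x) \<in> R\<^sup>+"
      then have "(x, x) \<in> R" using trancl_id[OF trR] by simp
      then show False unfolding R_def using llex_irrefl by auto
    qed
  qed
  have wfR: "wf R" by (rule finite_acyclic_wf[OF fR acR])
  have "w0 \<in> S" unfolding S_def using w0 by auto
  from wfE_min[OF wfR this] obtain m where m: "m \<in> S" "\<And>y. (y, m) \<in> R \<Longrightarrow> y \<notin> S" by blast
  have ml: "m \<in> lists (digits q)" using m(1) unfolding S_def by auto
  have nm: "\<not> (\<exists>v \<in> lists (digits q). llex_less v m \<and> str_equiv p q v m)"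
  proof
    assume "\<exists>v \<in> lists (digits q). llex_less v m \<and> str_equiv p q v m"
    then obtain v where v: "v \<in> lists (digits q)" "llex_less v m" "str_equiv p q v m" by blast
    have "length v \<le> length m" using v(2) unfolding llex_less_def by auto
    then have "v \<in> S" using v m(1) unfolding S_def by (auto simp: str_equiv_iff)
    then have "(v, m) \<in> R" using m(1) v(2) unfolding R_def by auto
    then show False using m(2) \<open>v \<in> S\<close> by blast
  qed
  have "m \<in> Dom p q" unfolding Dom_def using ml nm by blast
  then show ?thesis using m(1) unfolding S_def by auto
qed

lemma cd_formula:
  "(mulx p q ^^ m) h = (fst ((mulx p q ^^ m) (0,1)) * fst (mulx p q h) + snd ((mulx p q ^^ m) (0,1)) * fst h,
                        fst ((mulx p q ^^ m) (0,1)) * snd (mulx p q h) + snd ((mulx p q ^^ m) (0,1)) * snd h)"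
proof (induction m)
  case 0
  then show ?case by simp
next
  case (Suc m)
  obtain c1 c0 where c: "(mulx p q ^^ m) (0,1) = (c1, c0)" by (cases "(mulx p q ^^ m) (0,1)")
  have "(mulx p q ^^ Suc m) h = mulx p q ((mulx p q ^^ m) h)" by simp
  also have "\<dots> = mulx p q (c1 * fst (mulx p q h) + c0 * fst h, c1 * snd (mulx p q h) + c0 * snd h)"
    using Suc c by simp
  also have "\<dots> = (fst ((mulx p q ^^ Suc m) (0,1)) * fst (mulx p q h) + snd ((mulx p q ^^ Suc m) (0,1)) * fst h,
                        fst ((mulx p q ^^ Suc m) (0,1)) * snd (mulx p q h) + snd ((mulx p q ^^ Suc m) (0,1)) * snd h)"
    using c by (simp add: mulx_def algebra_simps)
  finally show ?case .
qed

lemma cd_cong: "q dvd fst ((mulx p q ^^ Suc n) (0,1)) - (-p)^n \<and> q dvd snd ((mulx p q ^^ Suc n) (0,1))"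
proof (induction n)
  case 0
  then show ?case by (simp add: mulx_def)
next
  case (Suc n)
  define c where "c = (mulx p q ^^ Suc n) (0,1)"
  have c: "q dvd fst c - (-p)^n" "q dvd snd c" using Suc unfolding c_def by auto
  have e: "(mulx p q ^^ Suc (Suc n)) (0,1) = mulx p q c" unfolding c_def by simp
  have "fst (mulx p q c) - (-p)^Suc n = snd c + (-p) * (fst c - (-p)^n)"
    by (simp add: mulx_def algebra_simps)
  moreover have "q dvd snd c + (-p) * (fst c - (-p)^n)" using c by auto
  ultimately have "q dvd fst (mulx p q c) - (-p)^Suc n" by simp
  moreover have "q dvd snd (mulx p q c)" by (simp add: mulx_def)
  ultimately show ?case unfolding e by blast
qed

lemma unit_deg: "is_unit (x :: int poly) \<Longrightarrow> degree x = 0"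
  using dvd_imp_degree_le[of x 1] by auto



lemma noroot:
  assumes irr: "irreducible (tpoly p q)"
    and eq: "r2^2 - p * r1 * r2 - q * r1^2 = (0::int)"
  shows "r1 = 0 \<and> r2 = 0"
proof (cases "r1 = 0")
  case True
  then show ?thesis using eq by simp
next
  case False
  define g where "g = gcd r1 r2"
  have g0: "g \<noteq> 0" using False unfolding g_def by simp
  define s1 where "s1 = r1 div g"
  define s2 where "s2 = r2 div g"
  have r1: "r1 = g * s1" unfolding s1_def g_def by simp
  have r2: "r2 = g * s2" unfolding s2_def g_def by simp
  have cop: "coprime s1 s2" unfolding s1_def s2_def g_def
    using div_gcd_coprime False by blast
  have "g^2 * (s2^2 - p * s1 * s2 - q * s1^2) = 0"
    using eq unfolding r1 r2 by (simp add: algebra_simps power2_eq_square)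
  then have "g^2 * (s2^2 - s1 * (p * s2 + q * s1)) = 0" by (simp add: algebra_simps power2_eq_square)
  then have "s2^2 - s1 * (p * s2 + q * s1) = 0" using g0 by simp
  then have eq2: "s2^2 = s1 * (p * s2 + q * s1)" by simp
  then have "s1 dvd s2^2" by simp
  moreover have "coprime s1 (s2^2)" using cop by simp
  ultimately have "is_unit s1" using coprime_common_divisor[of s1 "s2^2" s1] by simp
  then have "\<bar>s1\<bar> = 1" by simp
  then have s1u: "s1 * s1 = 1" using abs_mult_self_eq[of s1] by simp
  define n where "n = s2 * s1"
  have "n^2 - p * n - q = s1 * s1 * (s2^2 - s1 * (p * s2 + q * s1))"
    unfolding n_def using s1u by (simp add: algebra_simps power2_eq_square)
  then have nr: "n^2 - p * n - q = 0" using eq2 by simp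
  have "tpoly p q = [:n, 1:] * [:p - n, 1:]"
    unfolding tpoly_def using nr by (simp add: algebra_simps power2_eq_square)
  from irreducibleD[OF irr this] have "is_unit [:n, 1:] \<or> is_unit [:p - n, 1:]" .
  then show ?thesis
  proof
    assume "is_unit [:n, 1:]" then show ?thesis using unit_deg[of "[:n, 1:]"] by simp
  next
    assume "is_unit [:p - n, 1:]" then show ?thesis using unit_deg[of "[:p - n, 1:]"] by simp
  qed
qed




lemma indep:
  assumes irr: "irreducible (tpoly p q)" and R: "R \<noteq> (0, 0)"
    and e1: "\<alpha> * fst (mulx p q R) + \<beta> * fst R = 0"
    and e2: "\<alpha> * snd (mulx p q R) + \<beta> * snd R = 0"
  shows "\<alpha> = 0"
proof -
  obtain r1 r2 where Rr: "R = (r1, r2)" by (cases R)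
  have "\<alpha> * (r2^2 - p * r1 * r2 - q * r1^2)
      = r2 * (\<alpha> * (r2 - p * r1) + \<beta> * r1) - r1 * (\<alpha> * (q * r1) + \<beta> * r2)"
    by (simp add: algebra_simps power2_eq_square)
  also have "\<dots> = 0" using e1 e2 by (simp add: Rr mulx_def)
  finally have "\<alpha> * (r2^2 - p * r1 * r2 - q * r1^2) = 0" .
  moreover have "r2^2 - p * r1 * r2 - q * r1^2 \<noteq> 0"
    using noroot[OF irr, of r2 r1] R Rr by auto
  ultimately show ?thesis by simp
qed

lemma core:
  assumes pq: "1 + \<bar>p\<bar> < \<bar>q\<bar>" and g: "gcd p q = 1" and irr: "irreducible (tpoly p q)"
    and R: "R \<noteq> (0, 0)" and m: "0 < m" and a: "a \<noteq> 0"
    and e1: "a * fst ((mulx p q ^^ m) R) = b * fst R"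
    and e2: "a * snd ((mulx p q ^^ m) R) = b * snd R"
  shows False
proof -
  define c1 where "c1 = fst ((mulx p q ^^ m) (0,1))"
  define c0 where "c0 = snd ((mulx p q ^^ m) (0,1))"
  have f: "(mulx p q ^^ m) R = (c1 * fst (mulx p q R) + c0 * fst R, c1 * snd (mulx p q R) + c0 * snd R)"
    unfolding c1_def c0_def by (rule cd_formula)
  have "(a * c1) * fst (mulx p q R) + (a * c0 - b) * fst R = 0"
    using e1 unfolding f by (simp add: algebra_simps)
  moreover have "(a * c1) * snd (mulx p q R) + (a * c0 - b) * snd R = 0"
    using e2 unfolding f by (simp add: algebra_simps)
  ultimately have "a * c1 = 0" using indep[OF irr R] by blast
  then have c10: "c1 = 0" using a by simp
  obtain n where mn: "m = Suc n" using m by (cases m) auto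
  have "q dvd c1 - (-p)^n" unfolding c1_def mn using cd_cong by blast
  then have d: "q dvd (-p)^n" using c10 by simp
  have "coprime p q" using g by (simp add: coprime_iff_gcd_eq_1)
  then have "coprime q ((-p)^n)" by (simp add: coprime_commute)
  then have "is_unit q" using coprime_common_divisor[of q "(-p)^n" q] d by simp
  then show False using pq by simp
qed

lemma foldl_closed:
  assumes "\<forall>x \<in> Q. \<forall>a \<in> A. \<delta> x a \<in> Q"
  shows "x \<in> Q \<Longrightarrow> xs \<in> lists A \<Longrightarrow> foldl \<delta> x xs \<in> Q"
  using assms by (induction xs arbitrary: x) auto

lemma pow_loop: "foldl \<delta> x v = x \<Longrightarrow> foldl \<delta> x (concat (replicate k v)) = x"
  by (induction k) auto




theorem mainTheorem7:
  fixes p q :: int and \<gamma> :: "int \<times> int"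
  assumes "1 + \<bar>p\<bar> < \<bar>q\<bar>"
    and "gcd p q = 1"
    and "irreducible (tpoly p q)"
    and "\<gamma> \<noteq> (0, 0)"
  shows "\<not> regular_lang (digits q) {w \<in> Dom p q. psi p q w \<in> cyclic_subgroup \<gamma>}"
    (is "\<not> regular_lang ?A ?L")
proof
  note pq = assms(1) and gg = assms(2) and irr = assms(3) and \<gamma>0 = assms(4)
  assume "regular_lang ?A ?L"
  then obtain Q :: "nat set" and s F \<delta> where fin: "finite Q" and sQ: "s \<in> Q" and FQ: "F \<subseteq> Q"
    and clos: "\<forall>x \<in> Q. \<forall>a \<in> ?A. \<delta> x a \<in> Q" and Leq: "?L = {w \<in> lists ?A. foldl \<delta> s w \<in> F}"
    unfolding regular_lang_def by blast
  have Lchar: "w \<in> ?L \<longleftrightarrow> w \<in> Dom p q \<and> vl p q w \<in> cyclic_subgroup \<gamma>" for w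
    by (simp add: psi_vl)
  have fA: "finite ?A" by (simp add: digits_def)
  define rep where "rep k = (SOME w. w \<in> Dom p q \<and> vl p q w = (int k * fst \<gamma>, int k * snd \<gamma>))" for k :: nat
  have rep: "rep k \<in> Dom p q \<and> vl p q (rep k) = (int k * fst \<gamma>, int k * snd \<gamma>)" for k
    unfolding rep_def by (rule someI_ex) (use dom_exists[OF pq] in blast)
  have "inj rep"
  proof (rule injI)
    fix k l assume "rep k = rep l"
    then have "(int k * fst \<gamma>, int k * snd \<gamma>) = (int l * fst \<gamma>, int l * snd \<gamma>)" using rep by metis
    then have "int k * fst \<gamma> = int l * fst \<gamma>" "int k * snd \<gamma> = int l * snd \<gamma>" by auto
    moreover have "fst \<gamma> \<noteq> 0 \<or> snd \<gamma> \<noteq> 0" using \<gamma>0 by (cases \<gamma>) auto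
    ultimately show "k = l" by auto
  qed
  then have "infinite (range rep)" by (rule range_inj_infinite)
  moreover have "range rep \<subseteq> ?L"
  proof
    fix w assume "w \<in> range rep"
    then obtain k where k: "w = rep k" by auto
    have "vl p q w \<in> cyclic_subgroup \<gamma>" unfolding cyclic_subgroup_def k using rep[of k] by auto
    then show "w \<in> ?L" using Lchar rep k by auto
  qed
  ultimately have infL: "infinite ?L" using infinite_super by blast
  obtain w where wL: "w \<in> ?L" and wlen: "card Q \<le> length w"
  proof (rule ccontr)
    assume "\<not> thesis"
    then have "\<forall>w \<in> ?L. length w < card Q" using that by (meson not_le)
    then have "?L \<subseteq> {xs. set xs \<subseteq> ?A \<and> length xs \<le> card Q}" using Leq by (auto simp: less_imp_le)
    then have "finite ?L" by (rule finite_subset) (rule finite_lists_length_le[OF fA])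
    then show False using infL by blast
  qed
  have wA: "w \<in> lists ?A" and wF: "foldl \<delta> s w \<in> F" using wL Leq by auto
  define st where "st i = foldl \<delta> s (take i w)" for i
  have stQ: "st ` {0..card Q} \<subseteq> Q"
  proof
    fix y assume "y \<in> st ` {0..card Q}"
    then obtain i where y: "y = st i" by auto
    have "take i w \<in> lists ?A" using wA by (auto dest: in_set_takeD)
    then show "y \<in> Q" unfolding y st_def using foldl_closed[OF clos sQ] by blast
  qed
  have "\<not> inj_on st {0..card Q}"
  proof
    assume "inj_on st {0..card Q}"
    from card_inj_on_le[OF this stQ fin] show False by simp
  qed
  then obtain i j where ij: "i < j" "j \<le> card Q" "st i = st j"
    unfolding inj_on_def by (metis atLeastAtMost_iff linorder_neqE_nat)
  define u where "u = take i w"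
  define v where "v = drop i (take j w)"
  define z where "z = drop j w"
  have tj: "take j w = u @ v" unfolding u_def v_def
    by (metis append_take_drop_id ij(1) less_imp_le min.absorb1 take_take)
  have weq: "w = u @ v @ z" using tj unfolding z_def by (metis append.assoc append_take_drop_id)
  have lv: "length v > 0" unfolding v_def using ij wlen by auto
  have loop: "foldl \<delta> (st i) v = st i"
    using ij(3) unfolding st_def tj by (simp add: u_def)
  define pw where "pw k = u @ concat (replicate k v) @ z" for k
  have pwL: "pw k \<in> ?L" for k
  proof -
    have "set u \<subseteq> ?A" "set v \<subseteq> ?A" "set z \<subseteq> ?A" using wA weq by (auto simp: in_lists_conv_set)
    then have pwA: "pw k \<in> lists ?A" unfolding pw_def by auto
    have su: "foldl \<delta> s u = st i" unfolding st_def u_def ..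
    have e1: "foldl \<delta> s (pw k) = foldl \<delta> (st i) z" unfolding pw_def by (simp add: su pow_loop[OF loop])
    have e2: "foldl \<delta> s w = foldl \<delta> (st i) z" by (subst weq) (simp add: su loop)
    have "foldl \<delta> s (pw k) = foldl \<delta> s w" using e1 e2 by simp
    then show ?thesis using pwA Leq wF by auto
  qed
  define f where "f k = vl p q (pw k)" for k
  have fc: "\<exists>c. f k = (c * fst \<gamma>, c * snd \<gamma>)" for k
    using pwL[of k] Lchar unfolding f_def cyclic_subgroup_def by auto
  obtain c0 where c0: "f 0 = (c0 * fst \<gamma>, c0 * snd \<gamma>)" using fc by blast
  obtain c1 where c1: "f 1 = (c1 * fst \<gamma>, c1 * snd \<gamma>)" using fc by blast
  obtain c2 where c2: "f 2 = (c2 * fst \<gamma>, c2 * snd \<gamma>)" using fc by blast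
  have "pw 0 \<noteq> pw 1" unfolding pw_def using lv by (auto dest: arg_cong[of _ _ length])
  then have f01: "f 0 \<noteq> f 1" unfolding f_def using pwL Lchar dom_unique by blast
  define N where "N = mulx p q ^^ length u"
  define P where "P = mulx p q ^^ length v"
  define G where "G k = vl p q (concat (replicate k v) @ z)" for k
  have fG: "f k = vl p q u + N (G k)" for k unfolding f_def pw_def G_def N_def by (simp add: vl_append)
  have GS: "G (Suc k) = vl p q v + P (G k)" for k unfolding G_def P_def by (simp add: vl_append)
  define R0 where "R0 = f 1 - f 0"
  have R0: "R0 = N (G 1 - G 0)" unfolding R0_def fG N_def by (simp add: mulxn_diff)
  have "f 2 - f 1 = N (G 2 - G 1)" unfolding fG N_def by (simp add: mulxn_diff)
  also have "G 2 - G 1 = P (G 1 - G 0)"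
    using GS[of 1] GS[of 0] unfolding P_def by (simp add: mulxn_diff numeral_2_eq_2)
  also have "N (P (G 1 - G 0)) = P R0" unfolding R0 N_def P_def by (rule mulxn_commute)
  finally have R1: "f 2 - f 1 = P R0" .
  have R0c: "R0 = ((c1 - c0) * fst \<gamma>, (c1 - c0) * snd \<gamma>)" unfolding R0_def c0 c1 by (simp add: algebra_simps)
  have R0nz: "R0 \<noteq> (0, 0)" unfolding R0_def using f01 by (simp add: zero_prod_def[symmetric])
  then have anz: "c1 - c0 \<noteq> 0" using R0c by auto
  have PR: "P R0 = ((c2 - c1) * fst \<gamma>, (c2 - c1) * snd \<gamma>)" unfolding R1[symmetric] c1 c2 by (simp add: algebra_simps)
  show False
  proof (rule core[OF pq gg irr R0nz _ anz])
    show "0 < length v" by (rule lv)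
    show "(c1 - c0) * fst ((mulx p q ^^ length v) R0) = (c2 - c1) * fst R0"
      using PR R0c unfolding P_def by simp
    show "(c1 - c0) * snd ((mulx p q ^^ length v) R0) = (c2 - c1) * snd R0"
      using PR R0c unfolding P_def by simp
  qed
qed


end
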